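(* Let $\Gamma=(V,E)$ be a reflexive, locally finite, $k$-separable graph, and assume that either $V$ is infinite or $\alpha_k(\Gamma)\le\alpha_{-k}(\Gamma)$. Let $A$ be a $k$-atom of $\Gamma$ and let $F$ be a $k$-fragment of $\Gamma$ with $|A\cap F|\ge k$. Then $A\subseteq F$. In particular, two distinct $k$-atoms of $\Gamma$ intersect in at most $k-1$ elements.
   Context: A graph is a pair $\Gamma=(V,E)$ with $E\subseteq V\times V$; reflexive means $(x,x)\in E$ for all $x$; locally finite means each $\Gamma(x)=\{y:(x,y)\in E\}$ is finite. For $A\subseteq V$: $\Gamma(A)=\bigcup_{x\in A}\Gamma(x)$, $\partial(A)=\Gamma(A)\setminus A$. $\Gamma^{-1}=(V,E^{-1})$ is the reverse graph. $\Gamma$ is $k$-separable if some finite $X$ has $|X|\ge k$ and $|V\setminus\Gamma(X)|\ge k$; then $\kappa_k(\Gamma)=\min\{|\partial(X)|: X\text{ finite}, |X|\ge k, |V\setminus\Gamma(X)|\ge k\}$, a $k$-fragment is a finite $X$ with $|X|\ge k$, $|V\setminus\Gamma(X)|\ge k$ and $|\partial(X)|=\kappa_k(\Gamma)$, a $k$-atom is a $k$-fragment of minimum cardinality, and $\alpha_k(\Gamma)$ is the cardinality of a $k$-atom. $\alpha_{-k}(\Gamma)=\alpha_k(\Gamma^{-1})$. *)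

theory Defs
  imports Main
begin

definition nbhd :: "('a \<times> 'a) set \<Rightarrow> 'a \<Rightarrow> 'a set" where
  "nbhd E x = {y. (x, y) \<in> E}"

definition nbhd_set :: "('a \<times> 'a) set \<Rightarrow> 'a set \<Rightarrow> 'a set" where
  "nbhd_set E A = (\<Union>x\<in>A. nbhd E x)"

definition bdry :: "('a \<times> 'a) set \<Rightarrow> 'a set \<Rightarrow> 'a set" where
  "bdry E A = nbhd_set E A - A"

definition is_graph :: "'a set \<Rightarrow> ('a \<times> 'a) set \<Rightarrow> bool" where
  "is_graph V E \<longleftrightarrow> E \<subseteq> V \<times> V"

definition reflexive_graph :: "'a set \<Rightarrow> ('a \<times> 'a) set \<Rightarrow> bool" where
  "reflexive_graph V E \<longleftrightarrow> (\<forall>x\<in>V. (x, x) \<in> E)"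

definition locally_finite :: "'a set \<Rightarrow> ('a \<times> 'a) set \<Rightarrow> bool" where
  "locally_finite V E \<longleftrightarrow> (\<forall>x\<in>V. finite (nbhd E x))"

definition card_ge :: "nat \<Rightarrow> 'a set \<Rightarrow> bool" where
  "card_ge k S \<longleftrightarrow> infinite S \<or> k \<le> card S"

definition sep_sets :: "'a set \<Rightarrow> ('a \<times> 'a) set \<Rightarrow> nat \<Rightarrow> 'a set set" where
  "sep_sets V E k = {X. X \<subseteq> V \<and> finite X \<and> k \<le> card X \<and> card_ge k (V - nbhd_set E X)}"

definition k_separable :: "'a set \<Rightarrow> ('a \<times> 'a) set \<Rightarrow> nat \<Rightarrow> bool" where
  "k_separable V E k \<longleftrightarrow> sep_sets V E k \<noteq> {}"

definition kappa :: "'a set \<Rightarrow> ('a \<times> 'a) set \<Rightarrow> nat \<Rightarrow> nat" where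
  "kappa V E k = (LEAST n. \<exists>X\<in>sep_sets V E k. n = card (bdry E X))"

definition fragment :: "'a set \<Rightarrow> ('a \<times> 'a) set \<Rightarrow> nat \<Rightarrow> 'a set \<Rightarrow> bool" where
  "fragment V E k X \<longleftrightarrow> X \<in> sep_sets V E k \<and> card (bdry E X) = kappa V E k"

definition alpha :: "'a set \<Rightarrow> ('a \<times> 'a) set \<Rightarrow> nat \<Rightarrow> nat" where
  "alpha V E k = (LEAST n. \<exists>X. fragment V E k X \<and> n = card X)"

definition atom :: "'a set \<Rightarrow> ('a \<times> 'a) set \<Rightarrow> nat \<Rightarrow> 'a set \<Rightarrow> bool" where
  "atom V E k X \<longleftrightarrow> fragment V E k X \<and> card X = alpha V E k"

definition alpha_neg :: "'a set \<Rightarrow> ('a \<times> 'a) set \<Rightarrow> nat \<Rightarrow> nat" where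
  "alpha_neg V E k = alpha V (E\<inverse>) k"

end

theory Submission
  imports Defs
begin

lemma nb_mono: "X \<subseteq> Y \<Longrightarrow> nbhd_set E X \<subseteq> nbhd_set E Y"
  unfolding nbhd_set_def by auto

lemma nb_Un: "nbhd_set E (X \<union> Y) = nbhd_set E X \<union> nbhd_set E Y"
  unfolding nbhd_set_def by auto

lemma nb_sub: "is_graph V E \<Longrightarrow> nbhd_set E X \<subseteq> V"
  unfolding nbhd_set_def nbhd_def is_graph_def by auto

lemma nb_refl: "reflexive_graph V E \<Longrightarrow> X \<subseteq> V \<Longrightarrow> X \<subseteq> nbhd_set E X"
  unfolding nbhd_set_def nbhd_def reflexive_graph_def by auto

lemma nb_fin: "locally_finite V E \<Longrightarrow> X \<subseteq> V \<Longrightarrow> finite X \<Longrightarrow> finite (nbhd_set E X)"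
  unfolding nbhd_set_def locally_finite_def by auto

lemma card_nb: "reflexive_graph V E \<Longrightarrow> locally_finite V E \<Longrightarrow> X \<subseteq> V \<Longrightarrow> finite X \<Longrightarrow>
   card (nbhd_set E X) = card X + card (bdry E X)"
proof -
  assume a: "reflexive_graph V E" "locally_finite V E" "X \<subseteq> V" "finite X"
  have s: "X \<subseteq> nbhd_set E X" using nb_refl a by blast
  have f: "finite (nbhd_set E X)" using nb_fin a by blast
  have "card (bdry E X) = card (nbhd_set E X) - card X"
    unfolding bdry_def using s a(4) by (simp add: card_Diff_subset)
  moreover have "card X \<le> card (nbhd_set E X)" using s f card_mono by blast
  ultimately show ?thesis by simp
qed

lemma card_ge_mono: "card_ge k S \<Longrightarrow> S \<subseteq> T \<Longrightarrow> card_ge k T"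
  unfolding card_ge_def by (meson card_mono finite_subset le_trans)

lemma kappa_le: "X \<in> sep_sets V E k \<Longrightarrow> kappa V E k \<le> card (bdry E X)"
  unfolding kappa_def by (rule Least_le) blast

lemma alpha_le: "fragment V E k X \<Longrightarrow> alpha V E k \<le> card X"
  unfolding alpha_def by (rule Least_le) blast

lemma dual:
  assumes g: "is_graph V E" and fV: "finite V" and fr: "fragment V E k F"
  shows "alpha_neg V E k \<le> card (V - nbhd_set E F)"
proof -
  define F' where "F' = V - nbhd_set E F"
  have Fs: "F \<in> sep_sets V E k" and Fk: "card (bdry E F) = kappa V E k"
    using fr unfolding fragment_def by auto
  have FV: "F \<subseteq> V" "finite F" "k \<le> card F" "card_ge k F'"
    using Fs unfolding sep_sets_def F'_def by auto
  have F'V: "F' \<subseteq> V" "finite F'" unfolding F'_def using fV by auto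
  have F'k: "k \<le> card F'" using FV(4) F'V(2) unfolding card_ge_def by auto
  have disj: "nbhd_set (E\<inverse>) F' \<inter> F = {}"
    unfolding F'_def nbhd_set_def nbhd_def by auto
  have rV: "nbhd_set (E\<inverse>) Y \<subseteq> V" for Y
    using g unfolding nbhd_set_def nbhd_def is_graph_def by auto
  have "F \<subseteq> V - nbhd_set (E\<inverse>) F'" using disj FV(1) by auto
  hence "k \<le> card (V - nbhd_set (E\<inverse>) F')"
    using FV(3) card_mono[of "V - nbhd_set (E\<inverse>) F'" F] fV by auto
  hence F's: "F' \<in> sep_sets V (E\<inverse>) k"
    using F'V F'k unfolding sep_sets_def card_ge_def by auto
  have bsub: "bdry (E\<inverse>) F' \<subseteq> bdry E F"
    using disj rV unfolding bdry_def F'_def by auto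
  have b1: "card (bdry (E\<inverse>) F') \<le> kappa V E k"
    using card_mono[OF _ bsub] fV Fk unfolding bdry_def using nb_sub[OF g] finite_subset
    by (metis Diff_subset)
  have ex: "\<exists>n. \<exists>X\<in>sep_sets V (E\<inverse>) k. n = card (bdry (E\<inverse>) X)" using F's by blast
  have "\<exists>X\<in>sep_sets V (E\<inverse>) k. kappa V (E\<inverse>) k = card (bdry (E\<inverse>) X)"
    unfolding kappa_def by (rule LeastI_ex[OF ex])
  then obtain Y where Ys: "Y \<in> sep_sets V (E\<inverse>) k"
    and Yk: "kappa V (E\<inverse>) k = card (bdry (E\<inverse>) Y)" by blast
  define Y' where "Y' = V - nbhd_set (E\<inverse>) Y"
  have YV: "Y \<subseteq> V" "k \<le> card Y" "card_ge k Y'"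
    using Ys unfolding sep_sets_def Y'_def by auto
  have Y'k: "k \<le> card Y'" using YV(3) fV unfolding card_ge_def Y'_def by auto
  have disj2: "nbhd_set E Y' \<inter> Y = {}"
    unfolding Y'_def nbhd_set_def nbhd_def by auto
  have "Y \<subseteq> V - nbhd_set E Y'" using disj2 YV(1) by auto
  hence "k \<le> card (V - nbhd_set E Y')"
    using YV(2) card_mono[of "V - nbhd_set E Y'" Y] fV by auto
  hence Y's: "Y' \<in> sep_sets V E k"
    using Y'k fV unfolding sep_sets_def card_ge_def Y'_def by auto
  have bsub2: "bdry E Y' \<subseteq> bdry (E\<inverse>) Y"
    using disj2 nb_sub[OF g] unfolding bdry_def Y'_def by auto
  have "kappa V E k \<le> card (bdry E Y')" using kappa_le[OF Y's] .
  also have "\<dots> \<le> card (bdry (E\<inverse>) Y)"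
    using card_mono[OF _ bsub2] fV rV unfolding bdry_def by (meson finite_Diff finite_subset)
  finally have "kappa V E k \<le> kappa V (E\<inverse>) k" using Yk by simp
  moreover have "kappa V (E\<inverse>) k \<le> card (bdry (E\<inverse>) F')" using kappa_le[OF F's] .
  ultimately have "fragment V (E\<inverse>) k F'" using b1 F's unfolding fragment_def by auto
  thus ?thesis unfolding alpha_neg_def F'_def[symmetric] by (rule alpha_le)
qed

lemma atom_sub:
  assumes g: "is_graph V E"
    and r: "reflexive_graph V E"
    and lf: "locally_finite V E"
    and h: "infinite V \<or> alpha V E k \<le> alpha_neg V E k"
    and at: "atom V E k A"
    and fr: "fragment V E k F"
    and kAF: "k \<le> card (A \<inter> F)"
  shows "A \<subseteq> F"
proof -
  let ?G = "nbhd_set E"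
  let ?K = "kappa V E k"
  have As: "A \<in> sep_sets V E k" "card (bdry E A) = ?K" "card A = alpha V E k"
    using at unfolding atom_def fragment_def by auto
  have Fs: "F \<in> sep_sets V E k" "card (bdry E F) = ?K"
    using fr unfolding fragment_def by auto
  have AV: "A \<subseteq> V" "finite A" "card_ge k (V - ?G A)" using As(1) unfolding sep_sets_def by auto
  have FV: "F \<subseteq> V" "finite F" using Fs(1) unfolding sep_sets_def by auto
  have "card_ge k (V - ?G (A \<inter> F))"
    by (rule card_ge_mono[OF AV(3)]) (use nb_mono[of "A \<inter> F" A E] in auto)
  hence Is: "A \<inter> F \<in> sep_sets V E k" using AV FV kAF unfolding sep_sets_def by auto
  have Ik: "?K \<le> card (bdry E (A \<inter> F))" using kappa_le[OF Is] .
  have fin: "finite (?G A)" "finite (?G F)" using nb_fin lf AV FV by blast+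
  have cA: "card (?G A) = card A + ?K" using card_nb[OF r lf AV(1,2)] As by simp
  have cF: "card (?G F) = card F + ?K" using card_nb[OF r lf FV] Fs by simp
  have cI: "card (?G (A \<inter> F)) = card (A \<inter> F) + card (bdry E (A \<inter> F))"
    using card_nb[OF r lf, of "A \<inter> F"] AV FV by auto
  have cU: "card (?G (A \<union> F)) = card (A \<union> F) + card (bdry E (A \<union> F))"
    using card_nb[OF r lf] AV FV by auto
  have "card (?G (A \<inter> F)) \<le> card (?G A \<inter> ?G F)"
    using nb_mono[of "A \<inter> F" A E] nb_mono[of "A \<inter> F" F E] fin by (intro card_mono) auto
  moreover have "card (?G A) + card (?G F) = card (?G A \<union> ?G F) + card (?G A \<inter> ?G F)"
    using fin card_Un_Int by blast
  ultimately have sub: "card (?G (A \<union> F)) + card (?G (A \<inter> F)) \<le> card (?G A) + card (?G F)"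
    by (simp add: nb_Un)
  have AF: "card A + card F = card (A \<union> F) + card (A \<inter> F)"
    using AV FV card_Un_Int by blast
  show ?thesis
  proof (cases "card_ge k (V - ?G (A \<union> F))")
    case True
    hence "A \<union> F \<in> sep_sets V E k" using AV FV As Is unfolding sep_sets_def
      by (auto intro: le_trans[OF _ card_mono])
    hence "?K \<le> card (bdry E (A \<union> F))" by (rule kappa_le)
    hence "card (bdry E (A \<inter> F)) = ?K" using sub cA cF cI cU AF Ik by linarith
    hence "fragment V E k (A \<inter> F)" using Is unfolding fragment_def by auto
    hence "card A \<le> card (A \<inter> F)" using alpha_le As by metis
    hence "A \<inter> F = A" using AV(2) by (metis Int_lower1 card_seteq)
    thus ?thesis by blast
  next
    case False
    define Z where "Z = V - ?G (A \<union> F)"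
    have Zf: "finite Z" "card Z < k" using False unfolding card_ge_def Z_def by auto
    have GU: "finite (?G (A \<union> F))" using fin by (simp add: nb_Un)
    have VZ: "V = ?G (A \<union> F) \<union> Z" using nb_sub[OF g] unfolding Z_def by auto
    hence fV: "finite V" using GU Zf by simp
    have cV: "card V = card (?G (A \<union> F)) + card Z"
      using VZ GU Zf by (metis Diff_disjoint Z_def card_Un_disjoint inf_commute)
    have GF: "?G F \<subseteq> V" using nb_sub[OF g] .
    have cF': "card (V - ?G F) + card (?G F) = card V"
      using GF fV by (metis card_Diff_subset card_mono finite_subset le_add_diff_inverse2)
    have "alpha V E k \<le> alpha_neg V E k" using h fV by auto
    moreover have "alpha_neg V E k \<le> card (V - ?G F)" using dual[OF g fV fr] .
    ultimately have aF: "card A \<le> card (V - ?G F)" using As by simp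
    have "A \<union> F = (A - F) \<union> F" by auto
    hence u: "card (A \<union> F) = card (A - F) + card F"
      using AV FV by (metis Diff_disjoint card_Un_disjoint finite_Diff inf_commute)
    have "A = (A - F) \<union> (A \<inter> F)" by auto
    hence a2: "card A = card (A - F) + card (A \<inter> F)"
      using AV by (metis Diff_Diff_Int Diff_disjoint card_Un_disjoint finite_Diff finite_Int inf_commute)
    show ?thesis using sub cA cF cI cU AF Ik cV cF' aF u a2 Zf kAF by linarith
  qed
qed

theorem mainTheorem4:
  fixes V :: "'a set" and E :: "('a \<times> 'a) set" and k :: nat and A F :: "'a set"
  assumes "is_graph V E"
    and "reflexive_graph V E"
    and "locally_finite V E"
    and "k_separable V E k"
    and "infinite V \<or> alpha V E k \<le> alpha_neg V E k"
    and "atom V E k A"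
    and "fragment V E k F"
    and "k \<le> card (A \<inter> F)"
  shows "A \<subseteq> F \<and>
         (\<forall>A1 A2. atom V E k A1 \<and> atom V E k A2 \<and> A1 \<noteq> A2 \<longrightarrow> card (A1 \<inter> A2) \<le> k - 1)"
proof
  show "A \<subseteq> F" using atom_sub assms by blast
  show "\<forall>A1 A2. atom V E k A1 \<and> atom V E k A2 \<and> A1 \<noteq> A2 \<longrightarrow> card (A1 \<inter> A2) \<le> k - 1"
  proof (intro allI impI)
    fix A1 A2 assume a: "atom V E k A1 \<and> atom V E k A2 \<and> A1 \<noteq> A2"
    show "card (A1 \<inter> A2) \<le> k - 1"
    proof (rule ccontr)
      assume "\<not> card (A1 \<inter> A2) \<le> k - 1"
      hence k1: "k \<le> card (A1 \<inter> A2)" "k \<le> card (A2 \<inter> A1)" by (auto simp: inf_commute)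
      have "A1 \<subseteq> A2" using atom_sub[OF assms(1-3,5)] a k1(1) unfolding atom_def by blast
      moreover have "A2 \<subseteq> A1" using atom_sub[OF assms(1-3,5)] a k1(2) unfolding atom_def by blast
      ultimately show False using a by blast
    qed
  qed
qed

end
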